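(* Let $k\ge 2$. Let $\theta$ be an antimorphic involution on $\Sigma^*$ and $\theta'$ an antimorphic involution on $\Sigma'^*$, for finite alphabets $\Sigma,\Sigma'$, such that $|\operatorname{Trn}(\theta')|\ge|\operatorname{Trn}(\theta)|$ and $|\operatorname{Idt}(\theta')|+|\operatorname{Trn}(\theta')|\ge|\operatorname{Idt}(\theta)|+|\operatorname{Trn}(\theta)|$. If there is an infinite word over $\Sigma$ that is pseudo-$k$th-power-free with respect to $\theta$, then there is an infinite word over $\Sigma'$ that is pseudo-$k$th-power-free with respect to $\theta'$.
   Context: Alphabets are totally ordered (letters $0,1,2,\dots$). A function $\theta:\Sigma^*\to\Sigma^*$ is an antimorphic involution if $\theta(uv)=\theta(v)\theta(u)$ and $\theta(\theta(w))=w$. $\operatorname{Idt}(\theta)=\{a\in\Sigma:\theta(a)=a\}$ and $\operatorname{Trn}(\theta)=\{a\in\Sigma:\theta(a)>a\}$. A nonempty word $w$ is a pseudo $k$th power with respect to $\theta$ if $w=u_1\cdots u_k$ where for all $1\le i,j\le k$, $u_i=u_j$ or $u_i=\theta(u_j)$; a word is pseudo-$k$th-power-free if no factor (contiguous subword) of it is a pseudo $k$th power. *)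

theory Defs
  imports Main
begin

definition antimorphic_involution :: "nat set \<Rightarrow> (nat list \<Rightarrow> nat list) \<Rightarrow> bool" where
  "antimorphic_involution S \<theta> \<longleftrightarrow>
     (\<forall>w \<in> lists S. \<theta> w \<in> lists S \<and> \<theta> (\<theta> w) = w) \<and>
     (\<forall>u \<in> lists S. \<forall>v \<in> lists S. \<theta> (u @ v) = \<theta> v @ \<theta> u)"

definition Idt :: "nat set \<Rightarrow> (nat list \<Rightarrow> nat list) \<Rightarrow> nat set" where
  "Idt S \<theta> = {a \<in> S. \<theta> [a] = [a]}"

definition Trn :: "nat set \<Rightarrow> (nat list \<Rightarrow> nat list) \<Rightarrow> nat set" where
  "Trn S \<theta> = {a \<in> S. \<exists>b. \<theta> [a] = [b] \<and> b > a}"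

definition pseudo_power :: "(nat list \<Rightarrow> nat list) \<Rightarrow> nat \<Rightarrow> nat list \<Rightarrow> bool" where
  "pseudo_power \<theta> k w \<longleftrightarrow> w \<noteq> [] \<and>
     (\<exists>us. length us = k \<and> concat us = w \<and>
        (\<forall>i<k. \<forall>j<k. us ! i = us ! j \<or> us ! i = \<theta> (us ! j)))"

definition infinite_pseudo_power_free :: "nat set \<Rightarrow> (nat list \<Rightarrow> nat list) \<Rightarrow> nat \<Rightarrow> (nat \<Rightarrow> nat) \<Rightarrow> bool" where
  "infinite_pseudo_power_free S \<theta> k x \<longleftrightarrow>
     (\<forall>n. x n \<in> S) \<and> (\<forall>i j. i < j \<longrightarrow> \<not> pseudo_power \<theta> k (map x [i..<j]))"

end

theory Submission
  imports Defs
begin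

definition tt :: "(nat list \<Rightarrow> nat list) \<Rightarrow> nat \<Rightarrow> nat" where
  "tt \<theta> a = hd (\<theta> [a])"

lemma ai_app: "antimorphic_involution S \<theta> \<Longrightarrow> u \<in> lists S \<Longrightarrow> v \<in> lists S \<Longrightarrow> \<theta> (u @ v) = \<theta> v @ \<theta> u"
  unfolding antimorphic_involution_def by blast

lemma ai_inv: "antimorphic_involution S \<theta> \<Longrightarrow> w \<in> lists S \<Longrightarrow> \<theta> (\<theta> w) = w"
  unfolding antimorphic_involution_def by blast

lemma ai_in: "antimorphic_involution S \<theta> \<Longrightarrow> w \<in> lists S \<Longrightarrow> \<theta> w \<in> lists S"
  unfolding antimorphic_involution_def by blast

lemma ai_nil:
  assumes "antimorphic_involution S \<theta>" shows "\<theta> [] = []"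
proof -
  have "\<theta> ([] @ []) = \<theta> [] @ \<theta> []" by (rule ai_app[OF assms]) auto
  then have "length (\<theta> []) = 2 * length (\<theta> [])" by simp
  then show ?thesis by simp
qed

lemma ai_nonempty:
  assumes "antimorphic_involution S \<theta>" "w \<in> lists S" "\<theta> w = []" shows "w = []"
proof -
  have "w = \<theta> (\<theta> w)" using assms ai_inv by metis
  then show ?thesis using assms ai_nil by metis
qed

lemma ai_single:
  assumes ai: "antimorphic_involution S \<theta>" and a: "a \<in> S" shows "\<theta> [a] = [tt \<theta> a]"
proof -
  have u: "\<theta> [a] \<in> lists S" "\<theta> (\<theta> [a]) = [a]" using ai a unfolding antimorphic_involution_def by auto
  show ?thesis
  proof (cases "\<theta> [a]")
    case Nil
    then show ?thesis using u ai_nil[OF ai] by simp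
  next
    case (Cons b v)
    show ?thesis
    proof (cases v)
      case Nil then show ?thesis using Cons by (simp add: tt_def)
    next
      case (Cons c v')
      have "\<theta> ([b] @ v) = \<theta> v @ \<theta> [b]" apply (rule ai_app[OF ai]) using u \<open>\<theta> [a] = b # v\<close> by auto
      moreover have "\<theta> v \<noteq> []" using ai_nonempty[OF ai, of v] u \<open>\<theta> [a] = b # v\<close> Cons by auto
      moreover have "\<theta> [b] \<noteq> []" using ai_nonempty[OF ai, of "[b]"] u \<open>\<theta> [a] = b # v\<close> by auto
      ultimately have "False" using u \<open>\<theta> [a] = b # v\<close> by (cases "\<theta> v") auto
      then show ?thesis ..
    qed
  qed
qed

lemma ai_word:
  assumes ai: "antimorphic_involution S \<theta>" shows "w \<in> lists S \<Longrightarrow> \<theta> w = rev (map (tt \<theta>) w)"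
proof (induction w)
  case Nil then show ?case using ai_nil[OF ai] by simp
next
  case (Cons a w)
  have "\<theta> ([a] @ w) = \<theta> w @ \<theta> [a]" apply (rule ai_app[OF ai]) using Cons.prems by auto
  then show ?case using Cons ai_single[OF ai] by simp
qed

lemma tt_in:
  assumes ai: "antimorphic_involution S \<theta>" and a: "a \<in> S" shows "tt \<theta> a \<in> S"
proof -
  have "\<theta> [a] \<in> lists S" using ai_in[OF ai] a by simp
  then show ?thesis using ai_single[OF ai a] by simp
qed

lemma tt_tt:
  assumes ai: "antimorphic_involution S \<theta>" and a: "a \<in> S" shows "tt \<theta> (tt \<theta> a) = a"
proof -
  have "\<theta> (\<theta> [a]) = [a]" using ai a unfolding antimorphic_involution_def by auto
  then show ?thesis using ai_single[OF ai a] ai_single[OF ai tt_in[OF ai a]] by simp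
qed

lemma Idt_eq: "antimorphic_involution S \<theta> \<Longrightarrow> Idt S \<theta> = {a\<in>S. tt \<theta> a = a}"
  unfolding Idt_def using ai_single by (auto simp: tt_def) force

lemma Trn_eq: "antimorphic_involution S \<theta> \<Longrightarrow> Trn S \<theta> = {a\<in>S. a < tt \<theta> a}"
  unfolding Trn_def using ai_single by (auto simp: tt_def)

lemma map_eq_imp:
  assumes "\<forall>c\<in>A. \<forall>d\<in>A. g c = \<phi> d \<longrightarrow> d = h c"
  shows "set v \<subseteq> A \<Longrightarrow> set r \<subseteq> A \<Longrightarrow> map \<phi> v = map g r \<Longrightarrow> v = map h r"
proof (induction v arbitrary: r)
  case Nil then show ?case by simp
next
  case (Cons a v)
  then show ?case using assms by (cases r) auto
qed


lemma word_transfer: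
  assumes ai: "antimorphic_involution S \<theta>" and ai': "antimorphic_involution S' \<theta>'"
    and inj: "inj_on \<phi> S" and img: "\<phi> ` S \<subseteq> S'"
    and key: "\<forall>c\<in>S. \<forall>d\<in>S. tt \<theta>' (\<phi> c) = \<phi> d \<longrightarrow> d = tt \<theta> c"
    and u: "u \<in> lists S" and v: "v \<in> lists S" and eq: "map \<phi> v = \<theta>' (map \<phi> u)"
  shows "v = \<theta> u"
proof -
  have "map \<phi> u \<in> lists S'" using u img by force
  then have "\<theta>' (map \<phi> u) = map (tt \<theta>' \<circ> \<phi>) (rev u)" using ai_word[OF ai'] by (simp add: rev_map)
  then have "map \<phi> v = map (tt \<theta>' \<circ> \<phi>) (rev u)" using eq by simp
  then have "v = map (tt \<theta>) (rev u)"
    using map_eq_imp[of S "tt \<theta>' \<circ> \<phi>" \<phi> "tt \<theta>" v "rev u"] key u v by auto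
  then show ?thesis using ai_word[OF ai u] by (simp add: rev_map)
qed

lemma ipf_transfer:
  assumes ai: "antimorphic_involution S \<theta>" and ai': "antimorphic_involution S' \<theta>'"
    and inj: "inj_on \<phi> S" and img: "\<phi> ` S \<subseteq> S'"
    and key: "\<forall>c\<in>S. \<forall>d\<in>S. tt \<theta>' (\<phi> c) = \<phi> d \<longrightarrow> d = tt \<theta> c"
    and x: "infinite_pseudo_power_free S \<theta> k x"
  shows "infinite_pseudo_power_free S' \<theta>' k (\<phi> \<circ> x)"
  unfolding infinite_pseudo_power_free_def
proof (intro conjI allI impI)
  fix n show "(\<phi> \<circ> x) n \<in> S'" using x img unfolding infinite_pseudo_power_free_def by auto
next
  fix i j :: nat assume ij: "i < j"
  define w where "w = map x [i..<j]"
  have w: "w \<in> lists S" using x unfolding infinite_pseudo_power_free_def w_def by auto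
  have np: "\<not> pseudo_power \<theta> k w" using x ij unfolding infinite_pseudo_power_free_def w_def by auto
  show "\<not> pseudo_power \<theta>' k (map (\<phi> \<circ> x) [i..<j])"
  proof
    assume "pseudo_power \<theta>' k (map (\<phi> \<circ> x) [i..<j])"
    then have pp: "pseudo_power \<theta>' k (map \<phi> w)" by (simp add: w_def)
    then obtain us' where us': "length us' = k" "concat us' = map \<phi> w"
      "\<forall>i<k. \<forall>j<k. us' ! i = us' ! j \<or> us' ! i = \<theta>' (us' ! j)"
      unfolding pseudo_power_def by blast
    define \<psi> where "\<psi> = inv_into S \<phi>"
    define us where "us = map (map \<psi>) us'"
    have sub: "set (us' ! i) \<subseteq> \<phi> ` S" if "i < k" for i
    proof -
        have "us' ! i \<in> set us'" using that us'(1) by simp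
        then have "set (us' ! i) \<subseteq> set (concat us')" by auto
        also have "\<dots> = \<phi> ` set w" using us'(2) by simp
        also have "\<dots> \<subseteq> \<phi> ` S" using w by auto
        finally show ?thesis .
    qed
    have hback: "map \<phi> (us ! i) = us' ! i" if "i < k" for i
      using sub[OF that] that us' by (simp add: us_def \<psi>_def map_idI f_inv_into_f subset_iff)
    have inS: "us ! i \<in> lists S" if "i < k" for i
      using sub[OF that] that us' by (auto simp: us_def \<psi>_def intro!: inv_into_into)
    have "concat us = map \<psi> (concat us')" by (simp add: us_def map_concat)
    also have "\<dots> = map \<psi> (map \<phi> w)" using us'(2) by simp
    also have "\<dots> = w" using w inj by (auto simp: \<psi>_def intro!: map_idI)
    finally have cw: "concat us = w" .
    have "pseudo_power \<theta> k w"
      unfolding pseudo_power_def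
    proof (intro conjI exI[of _ us])
      show "w \<noteq> []" using pp unfolding pseudo_power_def by auto
      show "length us = k" using us' by (simp add: us_def)
      show "concat us = w" by (rule cw)
      show "\<forall>i<k. \<forall>j<k. us ! i = us ! j \<or> us ! i = \<theta> (us ! j)"
      proof (intro allI impI)
        fix a b assume a: "a < k" and b: "b < k"
        show "us ! a = us ! b \<or> us ! a = \<theta> (us ! b)"
        proof (cases "us' ! a = us' ! b")
          case True then show ?thesis using a b us' by (simp add: us_def)
        next
          case False
          then have "map \<phi> (us ! a) = \<theta>' (map \<phi> (us ! b))" using us'(3) a b hback by metis
          then show ?thesis using word_transfer[OF ai ai' inj img key inS[OF b] inS[OF a]] by simp
        qed
      qed
    qed
    then show False using np by simp
  qed
qed


lemma exists_phi:
  assumes ai: "antimorphic_involution S \<theta>" and ai': "antimorphic_involution S' \<theta>'"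
    and fS: "finite S" and fS': "finite S'"
    and c1: "card (Trn S' \<theta>') \<ge> card (Trn S \<theta>)"
    and c2: "card (Idt S' \<theta>') + card (Trn S' \<theta>') \<ge> card (Idt S \<theta>) + card (Trn S \<theta>)"
  shows "\<exists>\<phi>. inj_on \<phi> S \<and> \<phi> ` S \<subseteq> S' \<and> (\<forall>c\<in>S. \<forall>d\<in>S. tt \<theta>' (\<phi> c) = \<phi> d \<longrightarrow> d = tt \<theta> c)"
proof -
  define t where "t = tt \<theta>"
  define t' where "t' = tt \<theta>'"
  define I where "I = Idt S \<theta>"
  define T where "T = Trn S \<theta>"
  define I' where "I' = Idt S' \<theta>'"
  define T' where "T' = Trn S' \<theta>'"
  have I: "I = {a\<in>S. t a = a}" using Idt_eq[OF ai] by (simp add: I_def t_def)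
  have T: "T = {a\<in>S. a < t a}" using Trn_eq[OF ai] by (simp add: T_def t_def)
  have I': "I' = {a\<in>S'. t' a = a}" using Idt_eq[OF ai'] by (simp add: I'_def t'_def)
  have T': "T' = {a\<in>S'. a < t' a}" using Trn_eq[OF ai'] by (simp add: T'_def t'_def)
  have tS: "\<And>a. a \<in> S \<Longrightarrow> t a \<in> S" "\<And>a. a \<in> S \<Longrightarrow> t (t a) = a"
    using tt_in[OF ai] tt_tt[OF ai] by (auto simp: t_def)
  have tS': "\<And>a. a \<in> S' \<Longrightarrow> t' a \<in> S'" "\<And>a. a \<in> S' \<Longrightarrow> t' (t' a) = a"
    using tt_in[OF ai'] tt_tt[OF ai'] by (auto simp: t'_def)
  have fin: "finite T" "finite T'" "finite I" "finite I'" using fS fS' by (auto simp: T T' I I')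
  obtain f where f: "f ` T \<subseteq> T'" "inj_on f T"
    using card_le_inj[OF fin(1,2)] c1 by (auto simp: T_def T'_def)
  define R where "R = I' \<union> (T' - f ` T)"
  have "card R = card I' + card (T' - f ` T)"
    unfolding R_def by (rule card_Un_disjoint) (use fin in \<open>auto simp: I' T'\<close>)
  also have "card (T' - f ` T) = card T' - card T"
    using f fin by (simp add: card_Diff_subset card_image)
  finally have "card I \<le> card R" using c1 c2 by (simp add: I_def T_def I'_def T'_def)
  moreover have "finite R" using fin by (simp add: R_def)
  ultimately obtain g where g: "g ` I \<subseteq> R" "inj_on g I"
    using card_le_inj[OF fin(3)] by blast
  define \<phi> where "\<phi> a = (if a \<in> T then f a else if t a \<in> T then t' (f (t a)) else g a)" for a
  have cls: "(a \<in> T \<and> t a \<notin> T \<and> a \<notin> I) \<or> (t a \<in> T \<and> a \<notin> T \<and> a \<notin> I) \<or> (a \<in> I \<and> a \<notin> T \<and> t a \<notin> T)"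
    if "a \<in> S" for a
    using that tS[of a] by (auto simp: T I)
  have T'p: "b \<in> S' \<and> t' b \<in> S' \<and> t' b \<notin> T' \<and> t' b \<notin> I' \<and> b \<notin> I'" if "b \<in> T'" for b
    using that tS'[of b] by (auto simp: T' I')
  have I'p: "b \<in> S' \<and> t' b = b \<and> b \<notin> T'" if "b \<in> I'" for b
    using that by (auto simp: T' I')
  have Rp: "b \<in> I' \<or> (b \<in> T' \<and> b \<notin> f ` T)" if "b \<in> R" for b using that by (auto simp: R_def)
  have fT: "f a \<in> T'" if "a \<in> T" for a using f that by auto
  have gI: "g a \<in> R" if "a \<in> I" for a using g that by auto
  have finj: "a = c" if "a \<in> T" "c \<in> T" "f a = f c" for a c using f that by (auto dest: inj_onD)
  have ginj: "a = c" if "a \<in> I" "c \<in> I" "g a = g c" for a c using g that by (auto dest: inj_onD)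
  have img: "\<phi> a \<in> S'" if "a \<in> S" for a
    using cls[OF that] fT gI T'p Rp I'p by (auto simp: \<phi>_def) blast
  have c2: "f a \<noteq> t' (f b)" if "a \<in> T" "b \<in> T" for a b
    using that fT T'p by metis
  have c3: "f a \<noteq> g c" if "a \<in> T" "c \<in> I" for a c
  proof
    assume "f a = g c"
    then have "f a \<in> R" using gI that by metis
    then show False using Rp T'p fT that by blast
  qed
  have c5: "t' (f b) \<noteq> g c" if "b \<in> T" "c \<in> I" for b c
  proof
    assume "t' (f b) = g c"
    then have "t' (f b) \<in> R" using gI that by metis
    then show False using Rp T'p fT that by blast
  qed
  have c4: "a = c" if "t a \<in> T" "t c \<in> T" "a \<in> S" "c \<in> S" "t' (f (t a)) = t' (f (t c))" for a c
  proof -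
    have "f (t a) = f (t c)" using that fT T'p tS'(2) by metis
    then have "t a = t c" using finj that by blast
    then show ?thesis using tS(2) that by metis
  qed
  have inj: "inj_on \<phi> S"
  proof (rule inj_onI)
    fix a c assume a: "a \<in> S" and c: "c \<in> S" and e: "\<phi> a = \<phi> c"
    show "a = c"
      using cls[OF a] cls[OF c] e
      unfolding \<phi>_def
      apply (elim disjE conjE)
      apply simp_all
      using finj ginj c2 c3 c4 c5 a c by metis+
  qed
  have tinv: "x = y" if "x \<in> S'" "y \<in> S'" "t' x = t' y" for x y using that tS'(2) by metis
  have IS: "a \<in> S" if "a \<in> I" for a using that I by auto
  have TS: "a \<in> S" if "a \<in> T" for a using that T by auto
  have Itt: "t a = a" if "a \<in> I" for a using that I by auto
  have key: "d = t c" if c: "c \<in> S" and d: "d \<in> S" and e: "t' (\<phi> c) = \<phi> d" for c d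
  proof -
    consider "c \<in> T" | "t c \<in> T" "c \<notin> T" | "c \<in> I" "c \<notin> T" "t c \<notin> T" using cls[OF c] by blast
    then show ?thesis
    proof cases
      case 1
      then have e1: "t' (f c) = \<phi> d" using e by (simp add: \<phi>_def)
      show ?thesis
      proof -
        consider "d \<in> T" | "t d \<in> T" "d \<notin> T" | "d \<in> I" "d \<notin> T" "t d \<notin> T" using cls[OF d] by blast
        then show ?thesis
        proof cases
          case 1 then show ?thesis using e1 c2 \<open>c \<in> T\<close> by (simp add: \<phi>_def; metis)
        next
          case 2
          then have "t' (f c) = t' (f (t d))" using e1 by (simp add: \<phi>_def)
          then have "f c = f (t d)" using tinv fT T'p \<open>c \<in> T\<close> 2 by metis
          then have "c = t d" using finj \<open>c \<in> T\<close> 2 by metis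
          then show ?thesis using tS(2) d by metis
        next
          case 3 then show ?thesis using e1 c5 \<open>c \<in> T\<close> by (simp add: \<phi>_def; metis)
        qed
      qed
    next
      case 2
      then have e1: "f (t c) = \<phi> d" using e tS'(2) fT T'p by (simp add: \<phi>_def)
      show ?thesis
      proof -
        consider "d \<in> T" | "t d \<in> T" "d \<notin> T" | "d \<in> I" "d \<notin> T" "t d \<notin> T" using cls[OF d] by blast
        then show ?thesis
        proof cases
          case 1 then show ?thesis using e1 finj \<open>t c \<in> T\<close> by (simp add: \<phi>_def; metis)
        next
          case 2 then show ?thesis using e1 c2 \<open>t c \<in> T\<close> by (simp add: \<phi>_def; metis)
        next
          case 3 then show ?thesis using e1 c3 \<open>t c \<in> T\<close> by (simp add: \<phi>_def; metis)
        qed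
      qed
    next
      case 3
      then have e1: "t' (g c) = \<phi> d" using e by (simp add: \<phi>_def)
      have gR: "g c \<in> R" using gI 3 by blast
      show ?thesis
      proof (cases "g c \<in> I'")
        case True
        then have e2: "g c = \<phi> d" using e1 I'p by metis
        consider "d \<in> T" | "t d \<in> T" "d \<notin> T" | "d \<in> I" "d \<notin> T" "t d \<notin> T" using cls[OF d] by blast
        then show ?thesis
        proof cases
          case 1 then show ?thesis using e2 c3 \<open>c \<in> I\<close> by (simp add: \<phi>_def; metis)
        next
          case 2 then have "g c = t' (f (t d))" using e2 by (simp add: \<phi>_def)
          then have "t' (g c) = f (t d)" using tS'(2) fT T'p 2 by metis
          then show ?thesis using True I'p c3 2 \<open>c \<in> I\<close> by metis
        next
          case 3 then have "g c = g d" using e2 by (simp add: \<phi>_def)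
          then show ?thesis using ginj 3 \<open>c \<in> I\<close> Itt by metis
        qed
      next
        case False
        then have gT: "g c \<in> T'" "g c \<notin> f ` T" using gR Rp by auto
        then have nt: "t' (g c) \<notin> T'" "t' (g c) \<notin> I'" using T'p by auto
        consider "d \<in> T" | "t d \<in> T" "d \<notin> T" | "d \<in> I" "d \<notin> T" "t d \<notin> T" using cls[OF d] by blast
        then show ?thesis
        proof cases
          case 1 then show ?thesis using e1 nt fT by (simp add: \<phi>_def; metis)
        next
          case 2 then have "t' (g c) = t' (f (t d))" using e1 by (simp add: \<phi>_def)
          then have "g c = f (t d)" using tinv fT T'p gT 2 by metis
          then show ?thesis using gT 2 by auto
        next
          case 3 then have "t' (g c) = g d" using e1 by (simp add: \<phi>_def)
          then show ?thesis using gI Rp nt 3 by metis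
        qed
      qed
    qed
  qed
  show ?thesis using inj img key by (intro exI[of _ \<phi>]) (auto simp: t_def t'_def)
qed

theorem mainTheorem14:
  fixes k :: nat and S S' :: "nat set" and \<theta> \<theta>' :: "nat list \<Rightarrow> nat list"
  assumes "k \<ge> 2"
    and "finite S" and "finite S'"
    and "antimorphic_involution S \<theta>" and "antimorphic_involution S' \<theta>'"
    and "card (Trn S' \<theta>') \<ge> card (Trn S \<theta>)"
    and "card (Idt S' \<theta>') + card (Trn S' \<theta>') \<ge> card (Idt S \<theta>) + card (Trn S \<theta>)"
    and "\<exists>x. infinite_pseudo_power_free S \<theta> k x"
  shows "\<exists>x'. infinite_pseudo_power_free S' \<theta>' k x'"
proof -
  obtain x where x: "infinite_pseudo_power_free S \<theta> k x" using assms(8) by blast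
  obtain \<phi> where p: "inj_on \<phi> S" "\<phi> ` S \<subseteq> S'"
    "\<forall>c\<in>S. \<forall>d\<in>S. tt \<theta>' (\<phi> c) = \<phi> d \<longrightarrow> d = tt \<theta> c"
    using exists_phi[OF assms(4,5,2,3,6,7)] by blast
  show ?thesis using ipf_transfer[OF assms(4,5) p x] by blast
qed

end
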